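(* Let $\Omega\subseteq\mathbb{R}^n$ be a bounded open set with smooth boundary, $\varepsilon>0$, $g\in C^{0,1}_{\mathrm{loc}}(\mathbb{R}^n)\cap L^\infty(\mathbb{R}^n)$, $f\in L^\infty(\Omega)$, and let $v_\varepsilon\in H^s_g(\Omega)\cap L^p(\Omega)$ be a weak solution of $(-\Delta)^sv_\varepsilon+\varepsilon^{-2s}W'(v_\varepsilon)=f$ in $\Omega$. Then $$\|v_\varepsilon\|_{L^\infty(\mathbb{R}^n)}\le\max\Big((1+c_W\varepsilon^{2s}\|f\|_{L^\infty(\Omega)})^{\frac{1}{p-1}},\ \|g\|_{L^\infty(\mathbb{R}^n\setminus\Omega)}\Big).$$
   Context: $n\ge2$, $s\in(0,1/2)$. $W$ satisfies: $W\in C^2(\mathbb{R};[0,\infty))$; $\{W=0\}=\{\pm1\}$, $W''(\pm1)>0$; there exist $p\in(1,\infty)$ and $c_W>0$ with $c_W^{-1}(|t|^{p-1}-1)\le|W'(t)|\le c_W(|t|^{p-1}+1)$ for all $t\in\mathbb{R}$ ($p$, $c_W$ are these constants). $\gamma_{n,s}:=s2^{2s}\pi^{-n/2}\Gamma(\frac{n+2s}{2})/\Gamma(1-s)$; $\mathcal{E}(v,\Omega):=\frac{\gamma_{n,s}}{4}\iint_{\Omega\times\Omega}\frac{|v(x)-v(y)|^2}{|x-y|^{n+2s}}+\frac{\gamma_{n,s}}{2}\iint_{\Omega\times\Omega^c}\frac{|v(x)-v(y)|^2}{|x-y|^{n+2s}}$; $\widehat H^s(\Omega)=\{v\in L^2_{\mathrm{loc}}:\mathcal{E}(v,\Omega)<\infty\}$;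 $H^s_{00}(\Omega)=\{v\in H^s(\mathbb{R}^n):v=0$ a.e. outside $\Omega\}$; $H^s_g(\Omega)=\{v\in\widehat H^s(\Omega):v=g$ a.e. outside $\Omega\}$. $\langle(-\Delta)^sv,\varphi\rangle_\Omega=\frac{\gamma_{n,s}}{2}\iint_{\Omega\times\Omega}\frac{(v(x)-v(y))(\varphi(x)-\varphi(y))}{|x-y|^{n+2s}}+\gamma_{n,s}\iint_{\Omega\times\Omega^c}\frac{(v(x)-v(y))(\varphi(x)-\varphi(y))}{|x-y|^{n+2s}}$. Weak solution: $\langle(-\Delta)^sv,\varphi\rangle_\Omega+\varepsilon^{-2s}\int_\Omega W'(v)\varphi=\int_\Omega f\varphi$ for all $\varphi\in H^s_{00}(\Omega)\cap L^p(\Omega)$. *)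

theory Defs
  imports "HOL-Analysis.Analysis" "HOL-Probability.Essential_Supremum"
begin

fun iter_dderiv :: "'a::euclidean_space list \<Rightarrow> ('a \<Rightarrow> real) \<Rightarrow> 'a \<Rightarrow> real" where
  "iter_dderiv [] f = f"
| "iter_dderiv (d # ds) f = (\<lambda>x. frechet_derivative (iter_dderiv ds f) (at x) d)"

definition smooth_on :: "'a::euclidean_space set \<Rightarrow> ('a \<Rightarrow> real) \<Rightarrow> bool" where
  "smooth_on U f \<longleftrightarrow> (\<forall>ds. iter_dderiv ds f differentiable_on U \<and> continuous_on U (iter_dderiv ds f))"

definition smooth_boundary :: "'a::euclidean_space set \<Rightarrow> bool" where
  "smooth_boundary \<Omega> \<longleftrightarrow>
     (\<forall>x0\<in>frontier \<Omega>. \<exists>U \<rho>. open U \<and> x0 \<in> U \<and> smooth_on U \<rho> \<and>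
        \<Omega> \<inter> U = {x\<in>U. \<rho> x < 0} \<and> frechet_derivative \<rho> (at x0) \<noteq> (\<lambda>_. 0))"

definition gamma_ns :: "nat \<Rightarrow> real \<Rightarrow> real" where
  "gamma_ns n s = s * 2 powr (2 * s) * pi powr (- real n / 2) * Gamma ((real n + 2 * s) / 2) / Gamma (1 - s)"

definition frac_kernel :: "real \<Rightarrow> 'a::euclidean_space \<Rightarrow> 'a \<Rightarrow> real" where
  "frac_kernel s x y = 1 / norm (x - y) powr (real DIM('a) + 2 * s)"

definition gag :: "real \<Rightarrow> ('a::euclidean_space \<times> 'a) set \<Rightarrow> ('a \<Rightarrow> real) \<Rightarrow> ennreal" where
  "gag s A v = (\<integral>\<^sup>+ z. indicator A z * ennreal ((v (fst z) - v (snd z))\<^sup>2 * frac_kernel s (fst z) (snd z))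
                  \<partial>(lebesgue \<Otimes>\<^sub>M lebesgue))"

definition frac_energy :: "real \<Rightarrow> 'a::euclidean_space set \<Rightarrow> ('a \<Rightarrow> real) \<Rightarrow> ennreal" where
  "frac_energy s \<Omega> v =
     ennreal (gamma_ns DIM('a) s / 4) * gag s (\<Omega> \<times> \<Omega>) v
   + ennreal (gamma_ns DIM('a) s / 2) * gag s (\<Omega> \<times> (- \<Omega>)) v"

definition L2loc :: "('a::euclidean_space \<Rightarrow> real) set" where
  "L2loc = {v. v \<in> borel_measurable lebesgue \<and>
      (\<forall>K. compact K \<longrightarrow> (\<integral>\<^sup>+ x. indicator K x * ennreal ((v x)\<^sup>2) \<partial>lebesgue) < \<infinity>)}"

definition Hhat :: "real \<Rightarrow> 'a::euclidean_space set \<Rightarrow> ('a \<Rightarrow> real) set" where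
  "Hhat s \<Omega> = {v. v \<in> L2loc \<and> frac_energy s \<Omega> v < \<infinity>}"

definition Hs :: "real \<Rightarrow> ('a::euclidean_space \<Rightarrow> real) set" where
  "Hs s = {v. v \<in> borel_measurable lebesgue \<and>
      (\<integral>\<^sup>+ x. ennreal ((v x)\<^sup>2) \<partial>lebesgue) < \<infinity> \<and> gag s UNIV v < \<infinity>}"

definition H00 :: "real \<Rightarrow> 'a::euclidean_space set \<Rightarrow> ('a \<Rightarrow> real) set" where
  "H00 s \<Omega> = {v. v \<in> Hs s \<and> (AE x in lebesgue. x \<notin> \<Omega> \<longrightarrow> v x = 0)}"

definition Hg :: "real \<Rightarrow> 'a::euclidean_space set \<Rightarrow> ('a \<Rightarrow> real) \<Rightarrow> ('a \<Rightarrow> real) set" where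
  "Hg s \<Omega> g = {v. v \<in> Hhat s \<Omega> \<and> (AE x in lebesgue. x \<notin> \<Omega> \<longrightarrow> v x = g x)}"

definition Lp_on :: "'a::euclidean_space set \<Rightarrow> real \<Rightarrow> ('a \<Rightarrow> real) set" where
  "Lp_on \<Omega> p = {v. set_borel_measurable lebesgue \<Omega> v \<and>
      (\<integral>\<^sup>+ x. indicator \<Omega> x * ennreal (\<bar>v x\<bar> powr p) \<partial>lebesgue) < \<infinity>}"

definition frac_form :: "real \<Rightarrow> 'a::euclidean_space set \<Rightarrow> ('a \<Rightarrow> real) \<Rightarrow> ('a \<Rightarrow> real) \<Rightarrow> real" where
  "frac_form s \<Omega> v \<phi> =
     gamma_ns DIM('a) s / 2 * (\<integral> z. indicator (\<Omega> \<times> \<Omega>) z *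
        ((v (fst z) - v (snd z)) * (\<phi> (fst z) - \<phi> (snd z)) * frac_kernel s (fst z) (snd z))
        \<partial>(lebesgue \<Otimes>\<^sub>M lebesgue))
   + gamma_ns DIM('a) s * (\<integral> z. indicator (\<Omega> \<times> (- \<Omega>)) z *
        ((v (fst z) - v (snd z)) * (\<phi> (fst z) - \<phi> (snd z)) * frac_kernel s (fst z) (snd z))
        \<partial>(lebesgue \<Otimes>\<^sub>M lebesgue))"

text \<open>Weak solution of (-Delta)^s v + eps^(-2s) W'(v) = f in \<Omega> (W' passed as Wd).\<close>
definition weak_solution ::
  "real \<Rightarrow> real \<Rightarrow> real \<Rightarrow> (real \<Rightarrow> real) \<Rightarrow> 'a::euclidean_space set \<Rightarrow> ('a \<Rightarrow> real) \<Rightarrow> ('a \<Rightarrow> real) \<Rightarrow> bool" where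
  "weak_solution s p \<epsilon> Wd \<Omega> f v \<longleftrightarrow>
     (\<forall>\<phi> \<in> H00 s \<Omega> \<inter> Lp_on \<Omega> p.
        frac_form s \<Omega> v \<phi> + \<epsilon> powr (- 2 * s) * (\<integral> x. indicator \<Omega> x * (Wd (v x) * \<phi> x) \<partial>lebesgue)
        = (\<integral> x. indicator \<Omega> x * (f x * \<phi> x) \<partial>lebesgue))"

text \<open>L-infinity norm on a set A (as an extended real; infinite if not essentially bounded).\<close>
definition Linf_on :: "'a::euclidean_space set \<Rightarrow> ('a \<Rightarrow> real) \<Rightarrow> ereal" where
  "Linf_on A u = esssup (restrict_space lebesgue A) (\<lambda>x. ereal \<bar>u x\<bar>)"

end

theory Submission
  imports Defs
begin

lemma gamma_ns_pos: assumes "0 < s" "s < 1" shows "gamma_ns n s > 0"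
  unfolding gamma_ns_def using assms
  by (intro divide_pos_pos mult_pos_pos Gamma_real_pos) auto

lemma sigma_finite_lebesgue: "sigma_finite_measure (lebesgue :: 'a::euclidean_space measure)"
proof
  show "\<exists>A. countable A \<and> A \<subseteq> sets (lebesgue::'a measure) \<and> \<Union> A = space lebesgue \<and> (\<forall>a\<in>A. emeasure lebesgue a \<noteq> \<infinity>)"
  proof (intro exI[of _ "range (\<lambda>n::nat. cball (0::'a) (real n))"] conjI)
    show "\<Union> (range (\<lambda>n::nat. cball (0::'a) (real n))) = space lebesgue"
      by (auto simp: mem_cball dist_norm) (metis real_arch_simple)
  next
    show "\<forall>a\<in>range (\<lambda>n::nat. cball (0::'a) (real n)). emeasure lebesgue a \<noteq> \<infinity>"
    proof
      fix a assume "a \<in> range (\<lambda>n::nat. cball (0::'a) (real n))"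
      then have "a \<in> lmeasurable" by auto
      then show "emeasure lebesgue a \<noteq> \<infinity>" unfolding fmeasurable_def mem_Collect_eq by (metis less_imp_neq)
    qed
  qed auto
qed

lemma AE_pair_leb:
  assumes "AE x in (lebesgue::'a::euclidean_space measure). P x"
  shows "AE z in (lebesgue::'a measure) \<Otimes>\<^sub>M lebesgue. P (fst z) \<and> P (snd z)"
proof -
  interpret S: sigma_finite_measure "lebesgue::'a measure" by (rule sigma_finite_lebesgue)
  from assms obtain N where N: "{x \<in> space lebesgue. \<not> P x} \<subseteq> N" "emeasure lebesgue N = 0" "N \<in> sets lebesgue"
    by (auto elim: AE_E)
  have U: "UNIV \<in> sets (lebesgue::'a measure)" using sets.top[of "lebesgue::'a measure"] by simp
  have N0: "N \<in> null_sets lebesgue" using N by (simp add: null_sets_def)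
  have "N \<times> UNIV \<in> null_sets ((lebesgue::'a measure) \<Otimes>\<^sub>M (lebesgue::'a measure))"
    by (rule S.times_in_null_sets1[OF N0 U])
  moreover have "UNIV \<times> N \<in> null_sets ((lebesgue::'a measure) \<Otimes>\<^sub>M (lebesgue::'a measure))"
    by (rule S.times_in_null_sets2[OF U N0])
  ultimately have "N \<times> UNIV \<union> UNIV \<times> N \<in> null_sets ((lebesgue::'a measure) \<Otimes>\<^sub>M (lebesgue::'a measure))"
    by auto
  then show ?thesis
    by (rule AE_I') (use N in \<open>auto simp: space_pair_measure\<close>)
qed

lemma Wd_sign:
  fixes W Wd :: "real \<Rightarrow> real"
  assumes der: "\<And>t. (W has_real_derivative Wd t) (at t)"
    and cont: "continuous_on UNIV Wd"
    and nonneg: "\<And>t. W t \<ge> 0"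
    and z1: "W 1 = 0" and z2: "W (-1) = 0"
    and nz: "\<And>t. \<bar>t\<bar> > 1 \<Longrightarrow> Wd t \<noteq> 0"
  shows "t > 1 \<Longrightarrow> Wd t > 0" and "t < -1 \<Longrightarrow> Wd t < 0"
proof -
  assume t: "t > 1"
  show "Wd t > 0"
  proof (rule ccontr)
    assume "\<not> Wd t > 0"
    with nz[of t] t have neg: "Wd t < 0" by force
    obtain \<xi> where xi: "1 < \<xi>" "\<xi> < t" "W t - W 1 = (t - 1) * Wd \<xi>"
      using MVT2[of 1 t W Wd] t der by auto
    have "Wd \<xi> \<ge> 0" using xi nonneg[of t] z1 t
      by (metis diff_gt_0_iff_gt diff_zero zero_le_mult_iff not_less)
    with nz[of \<xi>] xi have pos: "Wd \<xi> > 0" by force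
    obtain c where c: "\<xi> \<le> c" "c \<le> t" "Wd c = 0"
      using IVT2[of Wd t 0 \<xi>] neg pos xi cont
      by (auto intro: continuous_on_interior[OF cont] simp: continuous_on_eq_continuous_at)
    with nz[of c] xi show False by auto
  qed
next
  assume t: "t < -1"
  show "Wd t < 0"
  proof (rule ccontr)
    assume "\<not> Wd t < 0"
    with nz[of t] t have pos: "Wd t > 0" by force
    obtain \<xi> where xi: "t < \<xi>" "\<xi> < -1" "W (-1) - W t = (-1 - t) * Wd \<xi>"
      using MVT2[of t "-1" W Wd] t der by auto
    have "Wd \<xi> \<le> 0" using xi nonneg[of t] z2 t
      by (smt (verit, best) mult_pos_pos)
    with nz[of \<xi>] xi have neg: "Wd \<xi> < 0" by force
    obtain c where c: "t \<le> c" "c \<le> \<xi>" "Wd c = 0"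
      using IVT2[of Wd \<xi> 0 t] neg pos xi cont
      by (auto simp: continuous_on_eq_continuous_at)
    with nz[of c] xi show False by auto
  qed
qed

lemma id_leb_meas: "(\<lambda>x. x) \<in> borel_measurable (lebesgue :: 'a::euclidean_space measure)"
  by (rule measurable_completion) simp

lemma fst_meas: "(\<lambda>z. fst z) \<in> borel_measurable ((lebesgue :: 'a::euclidean_space measure) \<Otimes>\<^sub>M (lebesgue::'a measure))"
  by (rule measurable_compose[OF measurable_fst id_leb_meas])
lemma snd_meas: "(\<lambda>z. snd z) \<in> borel_measurable ((lebesgue :: 'a::euclidean_space measure) \<Otimes>\<^sub>M (lebesgue::'a measure))"
  by (rule measurable_compose[OF measurable_snd id_leb_meas])

lemma kernel_meas: "(\<lambda>z. frac_kernel s (fst z) (snd z)) \<in> borel_measurable ((lebesgue :: 'a::euclidean_space measure) \<Otimes>\<^sub>M (lebesgue::'a measure))"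
  unfolding frac_kernel_def using fst_meas snd_meas by measurable

lemma integrand_meas:
  assumes [measurable]: "v \<in> borel_measurable (lebesgue :: 'a::euclidean_space measure)"
  shows "(\<lambda>z. (v (fst z) - v (snd z))\<^sup>2 * frac_kernel s (fst z) (snd z)) \<in> borel_measurable ((lebesgue :: 'a measure) \<Otimes>\<^sub>M (lebesgue::'a measure))"
  using kernel_meas[of s] by measurable

lemma ennreal_mult_fin: "ennreal c * X < \<infinity> \<Longrightarrow> c > 0 \<Longrightarrow> X < \<infinity>"
proof (rule ccontr)
  assume a: "ennreal c * X < \<infinity>" "c > 0" "\<not> X < \<infinity>"
  then have "X = \<infinity>" by (metis less_top infinity_ennreal_def)
  then have "ennreal c * X = \<infinity>" using a(2) by (simp add: ennreal_mult_eq_top_iff)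
  with a(1) show False by simp
qed

lemma main_side:
  fixes \<Omega> :: "'n::euclidean_space set" and v g f :: "'n \<Rightarrow> real" and Wd :: "real \<Rightarrow> real"
  assumes s: "0 < s" "s < 1/2"
    and p: "p > 1" and cW: "cW > 0" and eps: "\<epsilon> > 0"
    and Wpos: "\<And>t. t > 1 \<Longrightarrow> Wd t > 0" and Wneg: "\<And>t. t < -1 \<Longrightarrow> Wd t < 0"
    and Wcont: "continuous_on UNIV Wd"
    and Wg1: "\<And>t. (\<bar>t\<bar> powr (p - 1) - 1) / cW \<le> \<bar>Wd t\<bar>"
    and Wg2: "\<And>t. \<bar>Wd t\<bar> \<le> cW * (\<bar>t\<bar> powr (p - 1) + 1)"
    and \<Omega>o: "open \<Omega>" and \<Omega>b: "bounded \<Omega>"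
    and vH: "v \<in> Hg s \<Omega> g" and vLp: "v \<in> Lp_on \<Omega> p"
    and sol: "weak_solution s p \<epsilon> Wd \<Omega> f v"
    and fb: "AE x in lebesgue. x \<in> \<Omega> \<longrightarrow> \<bar>f x\<bar> \<le> F"
    and gb: "AE x in lebesgue. x \<notin> \<Omega> \<longrightarrow> \<bar>g x\<bar> \<le> k"
    and kA: "(1 + cW * \<epsilon> powr (2 * s) * F) powr (1 / (p - 1)) \<le> k"
    and \<sigma>: "\<sigma> = 1 \<or> \<sigma> = -1"
  shows "AE x in lebesgue. \<sigma> * v x \<le> k"
proof -
  have \<sigma>abs: "\<bar>\<sigma>\<bar> = 1" "\<sigma> * \<sigma> = 1" using \<sigma> by auto
  have \<Omega>L[measurable]: "\<Omega> \<in> sets lebesgue" using lmeasurable_open[OF \<Omega>b \<Omega>o] by (simp add: fmeasurable_def)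
  have vm[measurable]: "v \<in> borel_measurable lebesgue" using vH by (simp add: Hg_def Hhat_def L2loc_def)
  have vg: "AE x in lebesgue. x \<notin> \<Omega> \<longrightarrow> v x = g x" using vH by (simp add: Hg_def)
  have outk: "AE x in lebesgue. x \<notin> \<Omega> \<longrightarrow> \<bar>v x\<bar> \<le> k" using vg gb by eventually_elim auto
  show ?thesis
  proof (cases "F < 0")
    case True
    have "AE x in lebesgue. x \<notin> \<Omega>" using fb by eventually_elim (use True in auto)
    with outk show ?thesis by eventually_elim (use \<sigma> in auto)
  next
    case False
    then have F0: "F \<ge> 0" by simp
    define B where "B = 1 + cW * \<epsilon> powr (2 * s) * F"
    have B1: "B \<ge> 1" unfolding B_def using F0 cW by simp
    have A1: "1 \<le> B powr (1 / (p - 1))" using B1 p by (intro ge_one_powr_ge_zero) auto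
    have k1: "k \<ge> 1" using A1 kA unfolding B_def by simp
    have kp: "k powr (p - 1) \<ge> B"
    proof -
      have "B = (B powr (1 / (p - 1))) powr (p - 1)" using p B1 by (simp add: powr_powr)
      also have "\<dots> \<le> k powr (p - 1)" using kA A1 p unfolding B_def[symmetric] by (intro powr_mono2) auto
      finally show ?thesis .
    qed
    define u where "u x = \<sigma> * v x" for x
    define w where "w x = max 0 (u x - k)" for x
    define \<phi> where "\<phi> x = \<sigma> * w x" for x
    have um[measurable]: "u \<in> borel_measurable lebesgue" unfolding u_def by measurable
    have wm[measurable]: "w \<in> borel_measurable lebesgue" unfolding w_def by measurable
    have \<phi>m[measurable]: "\<phi> \<in> borel_measurable lebesgue" unfolding \<phi>_def by measurable
    have uabs: "\<bar>u x\<bar> = \<bar>v x\<bar>" for x unfolding u_def using \<sigma>abs by (simp add: abs_mult)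
    have w0: "w x \<ge> 0" for x unfolding w_def by simp
    have wv: "w x \<le> \<bar>v x\<bar>" for x unfolding w_def using uabs[of x] k1 by auto
    have wpos: "w x > 0 \<Longrightarrow> \<bar>v x\<bar> > k" for x unfolding w_def using uabs[of x] by auto
    have \<phi>abs: "\<bar>\<phi> x\<bar> = w x" for x unfolding \<phi>_def using \<sigma>abs w0[of x] by (simp add: abs_mult)
    have wdiff: "(w x - w y)\<^sup>2 \<le> (v x - v y)\<^sup>2" for x y
    proof -
      have "\<bar>w x - w y\<bar> \<le> \<bar>u x - u y\<bar>" unfolding w_def by auto
      also have "\<dots> = \<bar>v x - v y\<bar>" unfolding u_def using \<sigma>abs by (simp add: abs_mult right_diff_distrib[symmetric])
      finally show ?thesis by (simp add: abs_le_square_iff)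
    qed
    have \<phi>diff: "(\<phi> x - \<phi> y)\<^sup>2 = (w x - w y)\<^sup>2" for x y
      unfolding \<phi>_def using \<sigma> by (auto simp: power2_commute)
    have mono_prod: "0 \<le> (v x - v y) * (\<phi> x - \<phi> y)" for x y
    proof -
      have "(v x - v y) * (\<phi> x - \<phi> y) = (u x - u y) * (w x - w y)"
        unfolding u_def \<phi>_def using \<sigma> by (auto simp: algebra_simps)
      also have "\<dots> \<ge> 0" unfolding w_def
        by (cases "u x \<le> u y") (auto intro: mult_nonneg_nonneg mult_nonpos_nonpos)
      finally show ?thesis .
    qed
    have out0: "AE x in lebesgue. x \<notin> \<Omega> \<longrightarrow> \<phi> x = 0"
      using outk by eventually_elim (use \<sigma> in \<open>auto simp: \<phi>_def w_def u_def abs_le_iff\<close>)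
    have vL2: "(\<integral>\<^sup>+ x. indicator K x * ennreal ((v x)\<^sup>2) \<partial>lebesgue) < \<infinity>" if "compact K" for K
      using vH that by (simp add: Hg_def Hhat_def L2loc_def)
    have vE: "frac_energy s \<Omega> v < \<infinity>" using vH by (simp add: Hg_def Hhat_def)
    have L2: "(\<integral>\<^sup>+ x. ennreal ((\<phi> x)\<^sup>2) \<partial>lebesgue) < \<infinity>"
    proof -
      have "(\<integral>\<^sup>+ x. ennreal ((\<phi> x)\<^sup>2) \<partial>lebesgue) \<le> (\<integral>\<^sup>+ x. indicator (closure \<Omega>) x * ennreal ((v x)\<^sup>2) \<partial>lebesgue)"
        using out0
      proof (intro nn_integral_mono_AE, eventually_elim)
        case (elim x)
        show ?case
        proof (cases "x \<in> \<Omega>")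
          case True
          have "(\<phi> x)\<^sup>2 = (w x)\<^sup>2" using \<phi>abs[of x] by (metis power2_abs)
          also have "\<dots> \<le> (\<bar>v x\<bar>)\<^sup>2" using wv[of x] w0[of x] by (intro power_mono) auto
          finally have "(\<phi> x)\<^sup>2 \<le> (v x)\<^sup>2" by simp
          moreover have "x \<in> closure \<Omega>" using True closure_subset by blast
          ultimately show ?thesis by (simp add: ennreal_leI)
        qed (use elim in simp)
      qed
      also have "\<dots> < \<infinity>" using vL2[of "closure \<Omega>"] \<Omega>b by (simp add: compact_closure)
      finally show ?thesis .
    qed
    define P where "P = (lebesgue::'n measure) \<Otimes>\<^sub>M (lebesgue::'n measure)"
    define Iv where "Iv z = ennreal ((v (fst z) - v (snd z))\<^sup>2 * frac_kernel s (fst z) (snd z))" for z :: "'n \<times> 'n"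
    have Ivm[measurable]: "Iv \<in> borel_measurable P"
      unfolding Iv_def P_def using integrand_meas[OF vm, of s] by measurable
    have \<Omega>c[measurable]: "- \<Omega> \<in> sets lebesgue" using \<Omega>L by (metis Compl_eq_Diff_UNIV sets.compl_sets space_lebesgue_on sets_lebesgue_on_refl lebesgue_on_UNIV_eq) 
    have S1[measurable]: "\<Omega> \<times> \<Omega> \<in> sets P" "\<Omega> \<times> (- \<Omega>) \<in> sets P" "(- \<Omega>) \<times> \<Omega> \<in> sets P"
      unfolding P_def using \<Omega>L \<Omega>c by (auto intro!: pair_measureI)
    have gagv: "gag s A v = (\<integral>\<^sup>+ z. indicator A z * Iv z \<partial>P)" for A
      unfolding gag_def Iv_def P_def ..
    have gE: "gag s (\<Omega> \<times> \<Omega>) v < \<infinity> \<and> gag s (\<Omega> \<times> - \<Omega>) v < \<infinity>"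
    proof -
      have g0: "gamma_ns DIM('n) s > 0" using gamma_ns_pos[of s] s by simp
      have a: "ennreal (gamma_ns DIM('n) s / 4) * gag s (\<Omega> \<times> \<Omega>) v < \<infinity>"
        and b: "ennreal (gamma_ns DIM('n) s / 2) * gag s (\<Omega> \<times> - \<Omega>) v < \<infinity>"
        using vE unfolding frac_energy_def by (simp_all add: less_top ennreal_add_eq_top)
      have "gag s (\<Omega> \<times> \<Omega>) v < \<infinity>" by (rule ennreal_mult_fin[OF a]) (use g0 in simp)
      moreover have "gag s (\<Omega> \<times> - \<Omega>) v < \<infinity>" by (rule ennreal_mult_fin[OF b]) (use g0 in simp)
      ultimately show ?thesis ..
    qed
    have swap: "gag s ((- \<Omega>) \<times> \<Omega>) v = gag s (\<Omega> \<times> - \<Omega>) v"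
    proof -
      interpret PS: pair_sigma_finite "lebesgue::'n measure" "lebesgue::'n measure"
        by (simp add: pair_sigma_finite_def sigma_finite_lebesgue)
      have dist: "distr P P (\<lambda>(x, y). (y, x)) = P" unfolding P_def by (rule PS.distr_pair_swap[symmetric])
      have sm: "(\<lambda>(x, y). (y, x)) \<in> measurable P P" unfolding P_def by measurable
      have "gag s ((- \<Omega>) \<times> \<Omega>) v = (\<integral>\<^sup>+ z. indicator ((- \<Omega>) \<times> \<Omega>) z * Iv z \<partial>(distr P P (\<lambda>(x, y). (y, x))))"
        unfolding gagv dist ..
      also have "\<dots> = (\<integral>\<^sup>+ z. indicator ((- \<Omega>) \<times> \<Omega>) ((\<lambda>(x, y). (y, x)) z) * Iv ((\<lambda>(x, y). (y, x)) z) \<partial>P)"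
        by (rule nn_integral_distr[OF sm]) (unfold dist; measurable)
      also have "\<dots> = (\<integral>\<^sup>+ z. indicator (\<Omega> \<times> - \<Omega>) z * Iv z \<partial>P)"
        by (intro nn_integral_cong)
           (auto simp: Iv_def indicator_def frac_kernel_def norm_minus_commute power2_commute split: prod.splits)
      finally show ?thesis unfolding gagv .
    qed
    have gagfin: "gag s UNIV \<phi> < \<infinity>"
    proof -
      have pt: "ennreal ((\<phi> a - \<phi> b)\<^sup>2 * frac_kernel s a b) \<le> Iv (a, b)" for a b
      proof -
        have K0: "0 \<le> frac_kernel s a b" by (simp add: frac_kernel_def)
        have "(\<phi> a - \<phi> b)\<^sup>2 * frac_kernel s a b \<le> (v a - v b)\<^sup>2 * frac_kernel s a b"
          using wdiff[of a b] \<phi>diff[of a b] K0 by (simp add: mult_right_mono)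
        then show ?thesis unfolding Iv_def by (simp add: ennreal_leI)
      qed
      have "gag s UNIV \<phi> \<le> (\<integral>\<^sup>+ z. indicator (\<Omega> \<times> \<Omega>) z * Iv z + indicator (\<Omega> \<times> - \<Omega>) z * Iv z + indicator ((- \<Omega>) \<times> \<Omega>) z * Iv z \<partial>P)"
        unfolding gag_def P_def[symmetric]
        using AE_pair_leb[OF out0] unfolding P_def[symmetric]
      proof (intro nn_integral_mono_AE, eventually_elim)
        case (elim z)
        obtain a b where z: "z = (a, b)" by fastforce
        show ?case
        proof (cases "a \<in> \<Omega>"; cases "b \<in> \<Omega>")
          assume "a \<notin> \<Omega>" "b \<notin> \<Omega>"
          then show ?thesis using elim z by simp
        qed (use pt[of a b] z in \<open>auto simp: indicator_def\<close>)
      qed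
      also have "\<dots> = gag s (\<Omega> \<times> \<Omega>) v + gag s (\<Omega> \<times> - \<Omega>) v + gag s ((- \<Omega>) \<times> \<Omega>) v"
        unfolding gagv P_def by (subst nn_integral_add; (simp add: P_def[symmetric])?; measurable?)+
      also have "\<dots> < \<infinity>" using gE swap by (simp add: less_top ennreal_add_eq_top)
      finally show ?thesis .
    qed
    have \<phi>H00: "\<phi> \<in> H00 s \<Omega>"
      unfolding H00_def Hs_def using \<phi>m L2 gagfin out0 by simp
    have \<phi>Lp: "\<phi> \<in> Lp_on \<Omega> p"
      unfolding Lp_on_def
    proof (intro CollectI conjI)
      show "set_borel_measurable lebesgue \<Omega> \<phi>" unfolding set_borel_measurable_def by measurable
      have "(\<integral>\<^sup>+ x. indicator \<Omega> x * ennreal (\<bar>\<phi> x\<bar> powr p) \<partial>lebesgue) \<le> (\<integral>\<^sup>+ x. indicator \<Omega> x * ennreal (\<bar>v x\<bar> powr p) \<partial>lebesgue)"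
      proof (intro nn_integral_mono mult_left_mono ennreal_leI)
        fix x show "\<bar>\<phi> x\<bar> powr p \<le> \<bar>v x\<bar> powr p" unfolding \<phi>abs using wv[of x] w0[of x] p by (intro powr_mono2) auto
      qed auto
      also have "\<dots> < \<infinity>" using vLp by (simp add: Lp_on_def)
      finally show "(\<integral>\<^sup>+ x. indicator \<Omega> x * ennreal (\<bar>\<phi> x\<bar> powr p) \<partial>lebesgue) < \<infinity>" .
    qed
    have weq: "frac_form s \<Omega> v \<phi> + \<epsilon> powr (- 2 * s) * (\<integral> x. indicator \<Omega> x * (Wd (v x) * \<phi> x) \<partial>lebesgue)
        = (\<integral> x. indicator \<Omega> x * (f x * \<phi> x) \<partial>lebesgue)"
      using sol \<phi>H00 \<phi>Lp unfolding weak_solution_def by blast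
    have pn: "0 \<le> indicator A z * ((v (fst z) - v (snd z)) * (\<phi> (fst z) - \<phi> (snd z)) * frac_kernel s (fst z) (snd z))" for A z
    proof -
      have K0: "0 \<le> frac_kernel s (fst z) (snd z)" by (simp add: frac_kernel_def)
      have "0 \<le> (v (fst z) - v (snd z)) * (\<phi> (fst z) - \<phi> (snd z)) * frac_kernel s (fst z) (snd z)"
        by (rule mult_nonneg_nonneg[OF mono_prod K0])
      then show ?thesis by (rule mult_nonneg_nonneg[OF indicator_pos_le])
    qed
    have gp: "gamma_ns DIM('n) s > 0" using gamma_ns_pos[of s] s by simp
    have ff: "frac_form s \<Omega> v \<phi> \<ge> 0"
      unfolding frac_form_def using gp
      by (intro add_nonneg_nonneg mult_nonneg_nonneg Bochner_Integration.integral_nonneg pn) auto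
    have vp_int: "integrable lebesgue (\<lambda>x. indicator \<Omega> x * \<bar>v x\<bar> powr p)"
    proof (rule integrableI_nonneg)
      show "(\<lambda>x. indicator \<Omega> x * \<bar>v x\<bar> powr p) \<in> borel_measurable lebesgue" by measurable
      show "AE x in lebesgue. 0 \<le> indicator \<Omega> x * \<bar>v x\<bar> powr p" by auto
      have "(\<integral>\<^sup>+ x. ennreal (indicator \<Omega> x * \<bar>v x\<bar> powr p) \<partial>lebesgue) = (\<integral>\<^sup>+ x. indicator \<Omega> x * ennreal (\<bar>v x\<bar> powr p) \<partial>lebesgue)"
        by (intro nn_integral_cong) (auto simp: indicator_def)
      also have "\<dots> < \<infinity>" using vLp by (simp add: Lp_on_def)
      finally show "(\<integral>\<^sup>+ x. ennreal (indicator \<Omega> x * \<bar>v x\<bar> powr p) \<partial>lebesgue) < \<infinity>" .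
    qed
    have pw: "\<bar>v x\<bar> powr (p - 1) * \<bar>v x\<bar> = \<bar>v x\<bar> powr p \<and> \<bar>v x\<bar> \<le> \<bar>v x\<bar> powr p" if "w x > 0" for x
    proof -
      have a1: "\<bar>v x\<bar> \<ge> 1" using wpos[OF that] k1 by simp
      have "\<bar>v x\<bar> powr (p - 1) * \<bar>v x\<bar> = \<bar>v x\<bar> powr (p - 1) * \<bar>v x\<bar> powr 1" using a1 by simp
      also have "\<dots> = \<bar>v x\<bar> powr (p - 1 + 1)" by (rule powr_add[symmetric])
      also have "\<dots> = \<bar>v x\<bar> powr p" by simp
      finally have e: "\<bar>v x\<bar> powr (p - 1) * \<bar>v x\<bar> = \<bar>v x\<bar> powr p" .
      have "\<bar>v x\<bar> = \<bar>v x\<bar> powr 1" using a1 by simp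
      also have "\<dots> \<le> \<bar>v x\<bar> powr p" using a1 p by (intro powr_mono) auto
      finally show ?thesis using e by simp
    qed
    have I2b: "\<bar>indicator \<Omega> x * (Wd (v x) * \<phi> x)\<bar> \<le> 2 * cW * (indicator \<Omega> x * \<bar>v x\<bar> powr p)" for x
    proof (cases "x \<in> \<Omega> \<and> w x > 0")
      case True
      have "\<bar>indicator \<Omega> x * (Wd (v x) * \<phi> x)\<bar> = \<bar>Wd (v x)\<bar> * w x" using True by (simp add: abs_mult \<phi>abs)
      also have "\<dots> \<le> cW * (\<bar>v x\<bar> powr (p - 1) + 1) * \<bar>v x\<bar>"
        by (intro mult_mono Wg2 wv w0) (use cW in auto)
      also have "\<dots> = cW * (\<bar>v x\<bar> powr p + \<bar>v x\<bar>)" using pw[of x] True by (simp add: algebra_simps)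
      also have "\<dots> \<le> cW * (\<bar>v x\<bar> powr p + \<bar>v x\<bar> powr p)" using pw[of x] True cW by (intro mult_left_mono) auto
      also have "\<dots> = 2 * cW * (indicator \<Omega> x * \<bar>v x\<bar> powr p)" using True by simp
      finally show ?thesis .
    next
      case False
      then have "indicator \<Omega> x * (Wd (v x) * \<phi> x) = 0" using \<phi>abs[of x] w0[of x] by (auto simp: indicator_def)
      moreover have "0 \<le> 2 * cW * (indicator \<Omega> x * \<bar>v x\<bar> powr p)" using cW by (intro mult_nonneg_nonneg) auto
      ultimately show ?thesis by (metis abs_zero)
    qed
    have I3b: "\<bar>indicator \<Omega> x * w x\<bar> \<le> indicator \<Omega> x * \<bar>v x\<bar> powr p" for x
    proof (cases "x \<in> \<Omega> \<and> w x > 0")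
      case True
      then show ?thesis using pw[of x] wv[of x] w0[of x] by (simp add: indicator_def)
    next
      case False
      then show ?thesis using w0[of x] by (auto simp: indicator_def)
    qed
    have I2: "integrable lebesgue (\<lambda>x. indicator \<Omega> x * (Wd (v x) * \<phi> x))"
    proof (rule Bochner_Integration.integrable_bound[OF integrable_mult_right[OF vp_int, of "2 * cW"]])
      have [measurable]: "Wd \<in> borel_measurable borel" using Wcont by (rule borel_measurable_continuous_onI)
      show "(\<lambda>x. indicator \<Omega> x * (Wd (v x) * \<phi> x)) \<in> borel_measurable lebesgue" by measurable
      show "AE x in lebesgue. norm (indicator \<Omega> x * (Wd (v x) * \<phi> x)) \<le> norm (2 * cW * (indicator \<Omega> x * \<bar>v x\<bar> powr p))"
        using I2b cW by (auto simp: indicator_def)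
    qed
    have I3: "integrable lebesgue (\<lambda>x. indicator \<Omega> x * w x)"
    proof (rule Bochner_Integration.integrable_bound[OF vp_int])
      show "(\<lambda>x. indicator \<Omega> x * w x) \<in> borel_measurable lebesgue" by measurable
      show "AE x in lebesgue. norm (indicator \<Omega> x * w x) \<le> norm (indicator \<Omega> x * \<bar>v x\<bar> powr p)"
        using I3b by (auto simp: indicator_def)
    qed
    have epsinv: "\<epsilon> powr (- 2 * s) = 1 / \<epsilon> powr (2 * s)"
      by (simp add: powr_minus divide_inverse)
    have e0: "\<epsilon> powr (2 * s) > 0" using eps by simp
    define h where "h x = \<epsilon> powr (- 2 * s) * (indicator \<Omega> x * (Wd (v x) * \<phi> x)) - F * (indicator \<Omega> x * w x)" for x
    have hpos: "h x > 0" if "x \<in> \<Omega>" "w x > 0" for x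
    proof -
      have uk: "u x > k" using that(2) unfolding w_def by auto
      have sw: "\<sigma> * Wd (v x) = \<bar>Wd (v x)\<bar>"
        using \<sigma>
      proof
        assume "\<sigma> = 1" then have "v x > 1" using uk k1 unfolding u_def by simp
        then show ?thesis using Wpos[of "v x"] \<open>\<sigma> = 1\<close> by simp
      next
        assume "\<sigma> = -1" then have "v x < -1" using uk k1 unfolding u_def by simp
        then show ?thesis using Wneg[of "v x"] \<open>\<sigma> = -1\<close> by simp
      qed
      have "k powr (p - 1) < \<bar>v x\<bar> powr (p - 1)"
        using wpos[OF that(2)] k1 p by (intro powr_less_mono2) auto
      then have "B < \<bar>v x\<bar> powr (p - 1)" using kp by simp
      then have "\<epsilon> powr (2 * s) * F < (\<bar>v x\<bar> powr (p - 1) - 1) / cW"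
        unfolding B_def using cW by (simp add: field_simps)
      also have "\<dots> \<le> \<bar>Wd (v x)\<bar>" by (rule Wg1)
      finally have "F < \<bar>Wd (v x)\<bar> / \<epsilon> powr (2 * s)" using e0 by (simp add: field_simps)
      then have "F * w x < (\<bar>Wd (v x)\<bar> / \<epsilon> powr (2 * s)) * w x" using that(2) by (rule mult_strict_right_mono)
      also have "\<dots> = \<epsilon> powr (- 2 * s) * (indicator \<Omega> x * (Wd (v x) * \<phi> x))"
        using that(1) sw unfolding epsinv \<phi>_def by (simp add: field_simps)
      finally show ?thesis unfolding h_def using that(1) by simp
    qed
    have h0: "h x \<ge> 0" for x
      using hpos[of x] w0[of x] unfolding h_def by (cases "x \<in> \<Omega> \<and> w x > 0") (auto simp: indicator_def \<phi>_def)
    have hint: "integrable lebesgue h" unfolding h_def using I2 I3 by auto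
    have inth: "integral\<^sup>L lebesgue h = \<epsilon> powr (- 2 * s) * (\<integral> x. indicator \<Omega> x * (Wd (v x) * \<phi> x) \<partial>lebesgue) - F * (\<integral> x. indicator \<Omega> x * w x \<partial>lebesgue)"
      unfolding h_def using I2 I3 by simp
    have rhs: "(\<integral> x. indicator \<Omega> x * (f x * \<phi> x) \<partial>lebesgue) \<le> F * (\<integral> x. indicator \<Omega> x * w x \<partial>lebesgue)"
    proof (cases "integrable lebesgue (\<lambda>x. indicator \<Omega> x * (f x * \<phi> x))")
      case True
      have "(\<integral> x. indicator \<Omega> x * (f x * \<phi> x) \<partial>lebesgue) \<le> (\<integral> x. F * (indicator \<Omega> x * w x) \<partial>lebesgue)"
      proof (rule integral_mono_AE[OF True])
        show "integrable lebesgue (\<lambda>x. F * (indicator \<Omega> x * w x))" using I3 by simp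
        show "AE x in lebesgue. indicator \<Omega> x * (f x * \<phi> x) \<le> F * (indicator \<Omega> x * w x)"
          using fb
        proof eventually_elim
          case (elim x)
          show ?case
          proof (cases "x \<in> \<Omega>")
            case True
            have "f x * \<phi> x \<le> \<bar>f x\<bar> * w x" using \<phi>abs[of x] by (metis abs_ge_self abs_mult)
            also have "\<dots> \<le> F * w x" using elim True w0[of x] by (intro mult_right_mono) auto
            finally show ?thesis using True by simp
          qed simp
        qed
      qed
      then show ?thesis by simp
    next
      case False
      then show ?thesis using F0 w0 by (simp add: not_integrable_integral_eq indicator_def)
    qed
    have "integral\<^sup>L lebesgue h \<le> 0" using inth weq ff rhs by linarith
    moreover have "integral\<^sup>L lebesgue h \<ge> 0" using h0 by simp
    ultimately have "integral\<^sup>L lebesgue h = 0" by simp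
    then have "AE x in lebesgue. h x = 0" using integral_nonneg_eq_0_iff_AE[OF hint] h0 by simp
    then have wAE: "AE x in lebesgue. x \<in> \<Omega> \<longrightarrow> w x = 0"
    proof eventually_elim
      case (elim x)
      show ?case
      proof
        assume xo: "x \<in> \<Omega>"
        show "w x = 0"
        proof (rule ccontr)
          assume "w x \<noteq> 0"
          then have "w x > 0" using w0[of x] by simp
          from hpos[OF xo this] elim show False by simp
        qed
      qed
    qed
    have "AE x in lebesgue. u x \<le> k"
      using wAE outk by eventually_elim (auto simp: w_def uabs[symmetric] abs_le_iff)
    then show ?thesis unfolding u_def .
  qed
qed

theorem corollary3p10:
  fixes \<Omega> :: "'n::euclidean_space set"
    and W Wd Wdd :: "real \<Rightarrow> real"
    and s p cW \<epsilon> :: real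
    and g f v :: "'n \<Rightarrow> real"
  assumes n2: "DIM('n) \<ge> 2"
    and s: "0 < s" "s < 1/2"
    and W_C2: "\<And>t. (W has_real_derivative Wd t) (at t)"
              "\<And>t. (Wd has_real_derivative Wdd t) (at t)"
              "continuous_on UNIV Wdd"
    and W_nonneg: "\<And>t. W t \<ge> 0"
    and W_zeros: "{t. W t = 0} = {-1, 1}"
    and W_nondeg: "Wdd 1 > 0" "Wdd (-1) > 0"
    and p: "p > 1" and cW: "cW > 0"
    and W_growth: "\<And>t. (\<bar>t\<bar> powr (p - 1) - 1) / cW \<le> \<bar>Wd t\<bar>"
                  "\<And>t. \<bar>Wd t\<bar> \<le> cW * (\<bar>t\<bar> powr (p - 1) + 1)"
    and \<Omega>: "bounded \<Omega>" "open \<Omega>" "smooth_boundary \<Omega>"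
    and eps: "\<epsilon> > 0"
    and g_lip: "\<forall>x. \<exists>r>0. \<exists>L. L-lipschitz_on (ball x r) g"
    and g_Linf: "Linf_on UNIV g < \<infinity>"
    and f_Linf: "Linf_on \<Omega> f < \<infinity>"
    and v_space: "v \<in> Hg s \<Omega> g" "v \<in> Lp_on \<Omega> p"
    and v_sol: "weak_solution s p \<epsilon> Wd \<Omega> f v"
  shows "Linf_on UNIV v \<le>
    ereal (max ((1 + cW * \<epsilon> powr (2 * s) * real_of_ereal (Linf_on \<Omega> f)) powr (1 / (p - 1)))
               (real_of_ereal (Linf_on (- \<Omega>) g)))"
proof -
  have Wcont: "continuous_on UNIV Wd"
    using W_C2(2) by (intro continuous_at_imp_continuous_on) (auto intro: DERIV_isCont)
  have W1: "W 1 = 0" "W (-1) = 0" using W_zeros by (auto simp: set_eq_iff)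
  have nz: "Wd t \<noteq> 0" if "\<bar>t\<bar> > 1" for t
  proof -
    have "\<bar>t\<bar> powr (p - 1) > 1" using that p by simp
    then have "(\<bar>t\<bar> powr (p - 1) - 1) / cW > 0" using cW by simp
    with W_growth(1)[of t] show ?thesis by auto
  qed
  note Wsg = Wd_sign[OF W_C2(1) Wcont W_nonneg W1 nz]
  have \<Omega>L: "\<Omega> \<in> sets lebesgue" using lmeasurable_open[OF \<Omega>(1,2)] by (simp add: fmeasurable_def)
  have \<Omega>c: "- \<Omega> \<in> sets lebesgue" using \<Omega>L by (metis Compl_eq_Diff_UNIV sets.compl_sets space_lebesgue_on sets_lebesgue_on_refl lebesgue_on_UNIV_eq)
  have vm: "v \<in> borel_measurable lebesgue" using v_space(1) by (simp add: Hg_def Hhat_def L2loc_def)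
  define Lf where "Lf = Linf_on \<Omega> f"
  have "AE x in restrict_space lebesgue \<Omega>. ereal \<bar>f x\<bar> \<le> Lf" unfolding Lf_def Linf_on_def by (rule esssup_AE)
  then have "AE x in lebesgue. x \<in> \<Omega> \<longrightarrow> ereal \<bar>f x\<bar> \<le> Lf"
    by (subst (asm) AE_restrict_space_iff) (use \<Omega>L in simp_all)
  then have fb: "AE x in lebesgue. x \<in> \<Omega> \<longrightarrow> \<bar>f x\<bar> \<le> real_of_ereal Lf"
    using f_Linf unfolding Lf_def[symmetric] by - (erule eventually_mono, cases Lf, auto)
  define LU where "LU = Linf_on UNIV g"
  have gmU: "(\<lambda>x. ereal \<bar>g x\<bar>) \<in> borel_measurable (restrict_space lebesgue UNIV)"
  proof (rule ccontr)
    assume "\<not> (\<lambda>x. ereal \<bar>g x\<bar>) \<in> borel_measurable (restrict_space lebesgue UNIV)"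
    then have "Linf_on UNIV g = top" unfolding Linf_on_def by (rule esssup_non_measurable)
    with g_Linf show False by (simp add: top_ereal_def)
  qed
  have gm: "(\<lambda>x. ereal \<bar>g x\<bar>) \<in> borel_measurable lebesgue"
    using gmU measurable_cong_sets[OF sets_restrict_UNIV refl, of lebesgue borel] by simp
  have "AE x in restrict_space lebesgue UNIV. ereal \<bar>g x\<bar> \<le> LU" unfolding LU_def Linf_on_def by (rule esssup_AE)
  then have gU: "AE x in lebesgue. ereal \<bar>g x\<bar> \<le> LU"
    by (subst (asm) AE_restrict_space_iff) simp_all
  have "Linf_on (- \<Omega>) g \<le> LU" unfolding Linf_on_def
  proof (rule esssup_I)
    show "(\<lambda>x. ereal \<bar>g x\<bar>) \<in> borel_measurable (restrict_space lebesgue (- \<Omega>))"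
      using gm by (rule measurable_restrict_space1)
    show "AE x in restrict_space lebesgue (- \<Omega>). ereal \<bar>g x\<bar> \<le> LU"
      using gU by (subst AE_restrict_space_iff) (use \<Omega>c in \<open>simp_all add: eventually_mono\<close>)
  qed
  then have Lg: "Linf_on (- \<Omega>) g < \<infinity>" using g_Linf unfolding LU_def by (rule le_less_trans)
  have "AE x in restrict_space lebesgue (- \<Omega>). ereal \<bar>g x\<bar> \<le> Linf_on (- \<Omega>) g" unfolding Linf_on_def by (rule esssup_AE)
  then have "AE x in lebesgue. x \<in> - \<Omega> \<longrightarrow> ereal \<bar>g x\<bar> \<le> Linf_on (- \<Omega>) g"
    by (subst (asm) AE_restrict_space_iff) (use \<Omega>c in simp_all)
  then have gb0: "AE x in lebesgue. x \<notin> \<Omega> \<longrightarrow> \<bar>g x\<bar> \<le> real_of_ereal (Linf_on (- \<Omega>) g)"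
    using Lg by - (erule eventually_mono, cases "Linf_on (- \<Omega>) g", auto)
  define k where "k = max ((1 + cW * \<epsilon> powr (2 * s) * real_of_ereal (Linf_on \<Omega> f)) powr (1 / (p - 1)))
               (real_of_ereal (Linf_on (- \<Omega>) g))"
  have gb: "AE x in lebesgue. x \<notin> \<Omega> \<longrightarrow> \<bar>g x\<bar> \<le> k"
    using gb0 by eventually_elim (auto simp: k_def)
  have kA: "(1 + cW * \<epsilon> powr (2 * s) * real_of_ereal Lf) powr (1 / (p - 1)) \<le> k"
    unfolding k_def Lf_def by simp
  have m1: "AE x in lebesgue. 1 * v x \<le> k"
    by (rule main_side[OF s p cW eps Wsg Wcont W_growth \<Omega>(2,1) v_space v_sol fb gb kA, where \<sigma> = "1::real"]) auto
  have m2: "AE x in lebesgue. (-1) * v x \<le> k"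
    by (rule main_side[OF s p cW eps Wsg Wcont W_growth \<Omega>(2,1) v_space v_sol fb gb kA, where \<sigma> = "-1::real"]) auto
  have vAE: "AE x in lebesgue. ereal \<bar>v x\<bar> \<le> ereal k"
    using m1 m2 by eventually_elim auto
  have "Linf_on UNIV v \<le> ereal k" unfolding Linf_on_def
  proof (rule esssup_I)
    show "(\<lambda>x. ereal \<bar>v x\<bar>) \<in> borel_measurable (restrict_space lebesgue UNIV)"
      using vm by (intro measurable_restrict_space1) measurable
    show "AE x in restrict_space lebesgue UNIV. ereal \<bar>v x\<bar> \<le> ereal k"
      using vAE by (subst AE_restrict_space_iff) simp_all
  qed
  then show ?thesis unfolding k_def .
qed

end
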